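(* Let $k\geq2$ be an integer, let $\mathcal{S}$ be a ring, and let $P$ be a property of sequences over $\mathcal{S}$ (i.e., for each sequence over $\mathcal{S}$, $P$ is either true or false). Extend $P$ to sequences of matrices over $\mathcal{S}$ in one of the following two ways: $P$ holds for a sequence of matrices iff $P$ holds for (1) all, or (2) at least one, of the scalar sequences obtained by fixing an entry (fixed row and column). If $P$ is recursively solvable for $k$-regular sequences over $\mathcal{S}$, then $P$ (so extended) is recursively solvable for matrix-valued linear representation sequences of sets of $k$ square matrices over $\mathcal{S}$, all of the same dimension.
   Context: For $n\in\mathbb{N}_0$ let $(n)_k=n_{s-1}\cdots n_0$ be the standard base-$k$ representation of $n$ (no leading zeros; $(0)_k$ empty). A sequence $(f(n))_{n\geq0}$ over $\mathcal{S}$ is $k$-regular if there exist $r\geq0$, a $1\times r$ row vector $v$, an $r\times1$ column vector $w$ and $r\times r$ matrices $M_0,\dots,M_{k-1}$ with entries in $\mathcal{S}$ such that $f(n)=vM_{n_0}\cdots M_{n_{s-1}}w$ for all $n$; such a sequence is given to an algorithm via such a representation. Given square matrices $F_0,\dots,F_{k-1}$ over $\mathcal{S}$ of the same dimension, their matrix-valued linear representation sequence is $(F(n))_{n\geq0}$ with $F(n)=F_{n_0}\cdots F_{n_{s-1}}$ for $(n)_k=n_{s-1}\cdots n_0$; it is given to an algorithm via the matrices $F_0,\dots,F_{k-1}$. *)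

theory Defs
  imports "HOL-Library.Nat_Bijection" "Jordan_Normal_Form.Matrix"
begin

datatype recf = Zero | Succ | Proj nat | Comp recf "recf list" | Pr recf recf | Mn recf

inductive eval_recf :: "recf \<Rightarrow> nat list \<Rightarrow> nat \<Rightarrow> bool" where
  eval_Zero: "eval_recf Zero xs 0"
| eval_Succ: "eval_recf Succ (x # xs) (Suc x)"
| eval_Proj: "i < length xs \<Longrightarrow> eval_recf (Proj i) xs (xs ! i)"
| eval_Comp: "list_all2 (\<lambda>g y. eval_recf g xs y) gs ys \<Longrightarrow> eval_recf f ys z
              \<Longrightarrow> eval_recf (Comp f gs) xs z"
| eval_Pr0: "eval_recf f xs z \<Longrightarrow> eval_recf (Pr f g) (0 # xs) z"
| eval_PrS: "eval_recf (Pr f g) (n # xs) y \<Longrightarrow> eval_recf g (y # n # xs) z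
              \<Longrightarrow> eval_recf (Pr f g) (Suc n # xs) z"
| eval_Mn: "eval_recf f (n # xs) 0 \<Longrightarrow> (\<forall>m<n. \<exists>y. eval_recf f (m # xs) y \<and> y \<noteq> 0)
              \<Longrightarrow> eval_recf (Mn f) xs n"

definition recursively_solvable ::
  "('b \<Rightarrow> nat) \<Rightarrow> ('b \<Rightarrow> bool) \<Rightarrow> ('b \<Rightarrow> bool) \<Rightarrow> bool" where
  "recursively_solvable code valid Q \<longleftrightarrow>
     (\<exists>f. \<forall>x. valid x \<longrightarrow> eval_recf f [code x] (if Q x then 1 else 0))"

definition mat_code :: "('a \<Rightarrow> nat) \<Rightarrow> 'a mat \<Rightarrow> nat" where
  "mat_code enc A = list_encode [dim_row A, dim_col A,
     list_encode [enc (A $$ (i, j)). i \<leftarrow> [0..<dim_row A], j \<leftarrow> [0..<dim_col A]]]"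

definition linrep_code :: "('a \<Rightarrow> nat) \<Rightarrow> 'a mat \<times> 'a mat list \<times> 'a mat \<Rightarrow> nat" where
  "linrep_code enc x = (case x of (v, Ms, w) \<Rightarrow>
     list_encode [mat_code enc v, list_encode (map (mat_code enc) Ms), mat_code enc w])"

definition matlist_code :: "('a \<Rightarrow> nat) \<Rightarrow> 'a mat list \<Rightarrow> nat" where
  "matlist_code enc Fs = list_encode (map (mat_code enc) Fs)"

function base_digits :: "nat \<Rightarrow> nat \<Rightarrow> nat list" where
  "base_digits k n = (if n = 0 \<or> k < 2 then [] else n mod k # base_digits k (n div k))"
  by auto
termination by (relation "measure snd") auto

definition mat_prod_list :: "nat \<Rightarrow> 'a::semiring_1 mat list \<Rightarrow> 'a mat" where
  "mat_prod_list d Ms = foldr (*) Ms (1\<^sub>m d)"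

definition valid_linrep :: "nat \<Rightarrow> 'a mat \<times> 'a mat list \<times> 'a mat \<Rightarrow> bool" where
  "valid_linrep k x = (case x of (v, Ms, w) \<Rightarrow>
     v \<in> carrier_mat 1 (dim_col v) \<and> w \<in> carrier_mat (dim_col v) 1 \<and>
     length Ms = k \<and> (\<forall>M \<in> set Ms. M \<in> carrier_mat (dim_col v) (dim_col v)))"

definition linrep_seq :: "nat \<Rightarrow> 'a::semiring_1 mat \<times> 'a mat list \<times> 'a mat \<Rightarrow> nat \<Rightarrow> 'a" where
  "linrep_seq k x n = (case x of (v, Ms, w) \<Rightarrow>
     (v * mat_prod_list (dim_col v) (map (\<lambda>d. Ms ! d) (base_digits k n)) * w) $$ (0, 0))"

definition valid_matrep :: "nat \<Rightarrow> 'a mat list \<Rightarrow> bool" where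
  "valid_matrep k Fs \<longleftrightarrow> length Fs = k \<and>
     (\<forall>F \<in> set Fs. F \<in> carrier_mat (dim_row (Fs ! 0)) (dim_row (Fs ! 0)))"

definition matrep_dim :: "'a mat list \<Rightarrow> nat" where
  "matrep_dim Fs = dim_row (Fs ! 0)"

definition matrep_seq :: "nat \<Rightarrow> 'a::semiring_1 mat list \<Rightarrow> nat \<Rightarrow> 'a mat" where
  "matrep_seq k Fs n = mat_prod_list (matrep_dim Fs) (map (\<lambda>d. Fs ! d) (base_digits k n))"

definition P_all_entries :: "((nat \<Rightarrow> 'a) \<Rightarrow> bool) \<Rightarrow> nat \<Rightarrow> (nat \<Rightarrow> 'a mat) \<Rightarrow> bool" where
  "P_all_entries P d F \<longleftrightarrow> (\<forall>i<d. \<forall>j<d. P (\<lambda>n. F n $$ (i, j)))"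

definition P_some_entry :: "((nat \<Rightarrow> 'a) \<Rightarrow> bool) \<Rightarrow> nat \<Rightarrow> (nat \<Rightarrow> 'a mat) \<Rightarrow> bool" where
  "P_some_entry P d F \<longleftrightarrow> (\<exists>i<d. \<exists>j<d. P (\<lambda>n. F n $$ (i, j)))"

end

theory Submission imports Defs begin

definition comp :: "nat \<Rightarrow> recf \<Rightarrow> (nat list \<Rightarrow> nat) \<Rightarrow> bool" where
  "comp n F h \<longleftrightarrow> (\<forall>xs. length xs = n \<longrightarrow> eval_recf F xs (h xs))"

lemma compD: "comp n F h \<Longrightarrow> length xs = n \<Longrightarrow> eval_recf F xs (h xs)"
  unfolding comp_def by blast

lemma comp_Zero: "comp n Zero (\<lambda>_. 0)"
  unfolding comp_def by (auto intro: eval_Zero)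

lemma comp_Proj: "i < n \<Longrightarrow> comp n (Proj i) (\<lambda>xs. xs ! i)"
  unfolding comp_def by (auto intro: eval_Proj)

lemma comp_Succ: "comp 1 Succ (\<lambda>xs. Suc (xs ! 0))"
  unfolding comp_def
proof (intro allI impI)
  fix xs :: "nat list" assume "length xs = 1"
  then obtain a where "xs = [a]" by (cases xs) auto
  then show "eval_recf Succ xs (Suc (xs ! 0))" by (auto intro: eval_Succ)
qed

lemma eval_Proj': "i < length xs \<Longrightarrow> y = xs ! i \<Longrightarrow> eval_recf (Proj i) xs y"
  by (simp add: eval_Proj)

lemma eval_Comp1: "eval_recf g1 xs ya \<Longrightarrow> eval_recf F [ya] z \<Longrightarrow> eval_recf (Comp F [g1]) xs z"
  by (rule eval_Comp) auto
lemma eval_Comp2: "eval_recf g1 xs ya \<Longrightarrow> eval_recf g2 xs yb \<Longrightarrow> eval_recf F [ya,yb] z \<Longrightarrow> eval_recf (Comp F [g1,g2]) xs z"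
  by (rule eval_Comp) auto
lemma eval_Comp3: "eval_recf g1 xs ya \<Longrightarrow> eval_recf g2 xs yb \<Longrightarrow> eval_recf g3 xs yc \<Longrightarrow> eval_recf F [ya,yb,yc] z \<Longrightarrow> eval_recf (Comp F [g1,g2,g3]) xs z"
  by (rule eval_Comp) auto

lemma comp_Comp1: "comp 1 F H \<Longrightarrow> comp n g1 h1 \<Longrightarrow> (\<And>xs. length xs = n \<Longrightarrow> h xs = H [h1 xs]) \<Longrightarrow> comp n (Comp F [g1]) h"
  unfolding comp_def by (auto intro!: eval_Comp1)
lemma comp_Comp2: "comp 2 F H \<Longrightarrow> comp n g1 h1 \<Longrightarrow> comp n g2 h2 \<Longrightarrow> (\<And>xs. length xs = n \<Longrightarrow> h xs = H [h1 xs, h2 xs]) \<Longrightarrow> comp n (Comp F [g1,g2]) h"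
  unfolding comp_def by (auto intro!: eval_Comp2)
lemma comp_Comp3: "comp 3 F H \<Longrightarrow> comp n g1 h1 \<Longrightarrow> comp n g2 h2 \<Longrightarrow> comp n g3 h3 \<Longrightarrow> (\<And>xs. length xs = n \<Longrightarrow> h xs = H [h1 xs, h2 xs, h3 xs]) \<Longrightarrow> comp n (Comp F [g1,g2,g3]) h"
  unfolding comp_def by (auto intro!: eval_Comp3)

lemma eval_Pr_gen:
  assumes "eval_recf F xs (r 0)" "\<And>m. m < N \<Longrightarrow> eval_recf G (r m # m # xs) (r (Suc m))"
  shows "m \<le> N \<Longrightarrow> eval_recf (Pr F G) (m # xs) (r m)"
proof (induction m)
  case 0 then show ?case using assms(1) by (auto intro: eval_Pr0)
next
  case (Suc m) then show ?case using assms(2) by (auto intro: eval_PrS)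
qed

lemma comp_Pr:
  assumes "comp n F f" "comp (Suc (Suc n)) G g"
    "\<And>xs. length xs = n \<Longrightarrow> h (0 # xs) = f xs"
    "\<And>m xs. length xs = n \<Longrightarrow> h (Suc m # xs) = g (h (m # xs) # m # xs)"
  shows "comp (Suc n) (Pr F G) h"
  unfolding comp_def
proof (intro allI impI)
  fix xs :: "nat list" assume "length xs = Suc n"
  then obtain m ys where xs: "xs = m # ys" and l: "length ys = n" by (cases xs) auto
  have "eval_recf (Pr F G) (m # ys) (h (m # ys))"
    apply (rule eval_Pr_gen[where r = "\<lambda>m. h (m # ys)" and N = m])
    using assms l by (auto intro: compD)
  then show "eval_recf (Pr F G) xs (h xs)" using xs by simp
qed

lemma comp_Mn:
  assumes "comp (Suc n) F g"
    "\<And>xs. length xs = n \<Longrightarrow> g (h xs # xs) = 0"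
    "\<And>xs t. length xs = n \<Longrightarrow> t < h xs \<Longrightarrow> g (t # xs) \<noteq> 0"
  shows "comp n (Mn F) h"
  unfolding comp_def
proof (intro allI impI)
  fix xs :: "nat list" assume l: "length xs = n"
  show "eval_recf (Mn F) xs (h xs)"
  proof (rule eval_Mn)
    show "eval_recf F (h xs # xs) 0" using compD[OF assms(1), of "h xs # xs"] assms(2)[OF l] l by simp
    show "\<forall>m<h xs. \<exists>y. eval_recf F (m # xs) y \<and> y \<noteq> 0"
    proof (intro allI impI)
      fix m assume m: "m < h xs"
      have "eval_recf F (m # xs) (g (m # xs))" using compD[OF assms(1), of "m # xs"] l by simp
      moreover have "g (m # xs) \<noteq> 0" using assms(3)[OF l m] .
      ultimately show "\<exists>y. eval_recf F (m # xs) y \<and> y \<noteq> 0" by blast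
    qed
  qed
qed

fun rconst :: "nat \<Rightarrow> recf" where
  "rconst 0 = Zero" | "rconst (Suc c) = Comp Succ [rconst c]"

lemma eval_rconst: "eval_recf (rconst c) xs c"
  by (induction c) (auto intro: eval_Zero eval_Comp1 eval_Succ)

lemma comp_rconst: "comp n (rconst c) (\<lambda>_. c)"
  unfolding comp_def by (simp add: eval_rconst)

definition "ADD = Pr (Proj 0) (Comp Succ [Proj 0])"
lemma comp_ADD: "comp 2 ADD (\<lambda>xs. xs!0 + xs!1)"
  unfolding ADD_def numeral_2_eq_2
  apply (rule comp_Pr[OF comp_Proj comp_Comp1[OF comp_Succ comp_Proj]])
  by (auto simp: numeral_eq_Suc)


named_theorems compI
declare comp_Zero[compI] comp_Proj[compI] comp_Succ[compI] comp_Comp1[compI] comp_Comp2[compI]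
  comp_Comp3[compI] comp_rconst[compI] comp_ADD[compI]

definition "MULT = Pr Zero (Comp ADD [Proj 0, Proj 2])"
lemma comp_MULT[compI]: "comp 2 MULT (\<lambda>xs. xs!0 * xs!1)"
  unfolding MULT_def numeral_2_eq_2
  apply (rule comp_Pr)
  by (rule compI | simp)+

definition "PRED = Pr Zero (Proj 1)"
lemma comp_PRED[compI]: "comp 1 PRED (\<lambda>xs. xs!0 - 1)"
  unfolding PRED_def One_nat_def
  apply (rule comp_Pr)
  by (rule compI | simp)+

definition "SUBR = Pr (Proj 0) (Comp PRED [Proj 0])"
lemma comp_SUBR[compI]: "comp 2 SUBR (\<lambda>xs. xs!1 - xs!0)"
  unfolding SUBR_def numeral_2_eq_2
  apply (rule comp_Pr)
  by (rule compI | simp)+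

definition "SUB = Comp SUBR [Proj 1, Proj 0]"
lemma comp_SUB[compI]: "comp 2 SUB (\<lambda>xs. xs!0 - xs!1)"
  unfolding SUB_def
  by (rule compI | simp)+

definition "TRI = Pr Zero (Comp ADD [Proj 0, Comp Succ [Proj 1]])"
lemma comp_TRI[compI]: "comp 1 TRI (\<lambda>xs. triangle (xs!0))"
  unfolding TRI_def One_nat_def
  apply (rule comp_Pr)
  by (rule compI | simp)+

definition "PE = Comp ADD [Comp TRI [ADD], Proj 0]"
lemma comp_PE[compI]: "comp 2 PE (\<lambda>xs. prod_encode (xs!0, xs!1))"
  unfolding PE_def
  by (rule compI | simp add: prod_encode_def)+

definition "NLT = Comp SUB [rconst 1, Comp SUB [Proj 1, Proj 0]]"
lemma comp_NLT[compI]: "comp 2 NLT (\<lambda>xs. if xs!0 < xs!1 then 0 else 1)"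
  unfolding NLT_def
  by (rule compI | simp)+

definition tinv :: "nat \<Rightarrow> nat" where "tinv z = (LEAST t. z < triangle (Suc t))"

lemma tinv_ex: "z < triangle (Suc z)"
  by (induction z) auto

lemma tinv1: "z < triangle (Suc (tinv z))"
  unfolding tinv_def by (rule LeastI[of _ z]) (rule tinv_ex)

lemma tinv2: "t < tinv z \<Longrightarrow> \<not> z < triangle (Suc t)"
  unfolding tinv_def by (rule not_less_Least)

definition "TINV = Mn (Comp NLT [Proj 1, Comp TRI [Comp Succ [Proj 0]]])"
lemma comp_TINV[compI]: "comp 1 TINV (\<lambda>xs. tinv (xs!0))"
  unfolding TINV_def
  apply (rule comp_Mn[where g = "\<lambda>xs. if xs!1 < triangle (Suc (xs!0)) then 0 else 1"])
  apply (rule compI | simp)+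
  using tinv1 tinv2 by auto

lemma fst_prod_decode: "fst (prod_decode z) = z - triangle (tinv z)"
proof -
  define t where "t = tinv z"
  have le: "triangle t \<le> z"
  proof (cases t)
    case 0 then show ?thesis by simp
  next
    case (Suc t') then have "t' < tinv z" using t_def by simp
    from tinv2[OF this] Suc show ?thesis by simp
  qed
  have lt: "z < triangle t + Suc t" using tinv1[of z] t_def by simp
  define m where "m = z - triangle t"
  have z: "z = triangle t + m" using le m_def by simp
  have "m \<le> t" using lt z by simp
  then have "prod_decode z = (m, t - m)"
    using z by (simp add: prod_decode_triangle_add prod_decode_aux.simps)
  then show ?thesis using m_def t_def by simp
qed

definition "FST = Comp SUB [Proj 0, Comp TRI [TINV]]"
lemma comp_FST[compI]: "comp 1 FST (\<lambda>xs. fst (prod_decode (xs!0)))"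
  unfolding FST_def
  by (rule compI | simp add: fst_prod_decode)+

definition "HDL = Comp FST [PRED]"
lemma comp_HDL[compI]: "comp 1 HDL (\<lambda>xs. fst (prod_decode (xs!0 - 1)))"
  unfolding HDL_def
  by (rule compI | simp)+

lemma hdl_enc: "fst (prod_decode (list_encode (a # as) - 1)) = a"
  by simp

definition "DD = Comp HDL [HDL]"
lemma comp_DD[compI]: "comp 1 DD (\<lambda>xs. fst (prod_decode (fst (prod_decode (xs!0 - 1)) - 1)))"
  unfolding DD_def
  by (rule compI | simp)+

definition "L3 = Comp Succ [Comp PE [Proj 0, Comp Succ [Comp PE [Proj 1, Comp Succ [Comp PE [Proj 2, Zero]]]]]]"
lemma comp_L3[compI]: "comp 3 L3 (\<lambda>xs. list_encode [xs!0, xs!1, xs!2])"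
  unfolding L3_def
  by (rule compI | simp)+

definition "EQ = Comp SUB [rconst 1, Comp ADD [SUB, Comp SUB [Proj 1, Proj 0]]]"
lemma comp_EQ[compI]: "comp 2 EQ (\<lambda>xs. if xs!0 = xs!1 then 1 else 0)"
  unfolding EQ_def
  by (rule compI | simp)+

definition "SEL a b = Comp ADD [Comp MULT [EQ, rconst a], Comp MULT [Comp SUB [rconst 1, EQ], rconst b]]"
lemma comp_SEL[compI]: "comp 2 (SEL a b) (\<lambda>xs. if xs!0 = xs!1 then a else b)"
  unfolding SEL_def
  by (rule compI | simp)+


fun rrf :: "nat \<Rightarrow> nat \<Rightarrow> nat \<Rightarrow> nat \<Rightarrow> nat \<Rightarrow> nat" where
  "rrf a b 0 i d = 0"
| "rrf a b (Suc m) i d = Suc (prod_encode (if d - Suc m = i then a else b, rrf a b m i d))"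

lemma rrf_correct: "m \<le> d \<Longrightarrow> rrf a b m i d = list_encode (map (\<lambda>l. if l = i then a else b) [d-m..<d])"
proof (induction m)
  case 0 then show ?case by simp
next
  case (Suc m)
  have "[d - Suc m..<d] = (d - Suc m) # [d-m..<d]"
    using Suc.prems by (simp add: upt_conv_Cons Suc_diff_Suc)
  then show ?case using Suc by simp
qed

definition "RR a b = Pr Zero (Comp Succ [Comp PE [Comp (SEL a b) [Comp SUB [Proj 3, Comp Succ [Proj 1]], Proj 2], Proj 0]])"
lemma comp_RR[compI]: "comp 3 (RR a b) (\<lambda>xs. rrf a b (xs!0) (xs!1) (xs!2))"
  unfolding RR_def numeral_3_eq_3
  apply (rule comp_Pr)
  apply (rule compI | simp)+
  done

definition "LL a b = Comp (RR a b) [Proj 1, Proj 0, Proj 1]"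
lemma comp_LL[compI]: "comp 2 (LL a b) (\<lambda>xs. rrf a b (xs!1) (xs!0) (xs!1))"
  unfolding LL_def
  by (rule compI | simp)+

definition Dx :: "nat \<Rightarrow> nat" where "Dx x = fst (prod_decode (fst (prod_decode (x - 1)) - 1))"

definition ccf :: "nat \<Rightarrow> nat \<Rightarrow> nat \<Rightarrow> nat \<Rightarrow> nat \<Rightarrow> nat" where
  "ccf a b x i j = list_encode [list_encode [1, Dx x, rrf a b (Dx x) i (Dx x)], x,
      list_encode [Dx x, 1, rrf a b (Dx x) j (Dx x)]]"

definition "CC a b = Comp L3 [Comp L3 [rconst 1, Comp DD [Proj 0], Comp (LL a b) [Proj 1, Comp DD [Proj 0]]], Proj 0,
   Comp L3 [Comp DD [Proj 0], rconst 1, Comp (LL a b) [Proj 2, Comp DD [Proj 0]]]]"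
lemma comp_CC[compI]: "comp 3 (CC a b) (\<lambda>xs. ccf a b (xs!0) (xs!1) (xs!2))"
  unfolding CC_def
  by (rule compI | simp add: ccf_def Dx_def)+

definition "GIN Fq a b = Comp MULT [Proj 0, Comp Fq [Comp (CC a b) [Proj 3, Proj 2, Proj 1]]]"
definition "INNER Fq a b = Pr (rconst 1) (GIN Fq a b)"
definition "GOUT Fq a b = Comp MULT [Proj 0, Comp (INNER Fq a b) [Comp DD [Proj 2], Proj 1, Proj 2]]"
definition "OUTER Fq a b = Pr (rconst 1) (GOUT Fq a b)"
definition "PROG Fq a b = Comp (OUTER Fq a b) [DD, Proj 0]"

lemma eval_comp: "comp n F h \<Longrightarrow> length xs = n \<Longrightarrow> y = h xs \<Longrightarrow> eval_recf F xs y"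
  using compD by blast

lemma main_loop:
  assumes "\<And>i j. i < Dx x \<Longrightarrow> j < Dx x \<Longrightarrow> eval_recf Fq [ccf a b x i j] (val i j)"
  shows "eval_recf (PROG Fq a b) [x] (\<Prod>i<Dx x. \<Prod>j<Dx x. val i j)"
proof -
  define d where "d = Dx x"
  have inner: "eval_recf (INNER Fq a b) [d, i, x] (\<Prod>j<d. val i j)" if i: "i < d" for i
    unfolding INNER_def
  proof (rule eval_Pr_gen[where r = "\<lambda>m. \<Prod>j<m. val i j" and N = d])
    show "eval_recf (rconst 1) [i, x] (\<Prod>j<0. val i j)" using eval_rconst[of 1 "[i,x]"] by simp
    fix m assume m: "m < d"
    show "eval_recf (GIN Fq a b) ((\<Prod>j<m. val i j) # m # [i, x]) (\<Prod>j<Suc m. val i j)"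
      unfolding GIN_def
      apply (rule eval_Comp2)
        apply (rule eval_Proj) apply simp
       apply (rule eval_Comp1)
        apply (rule eval_Comp3)
           apply (rule eval_Proj, simp)+
        apply (rule eval_comp[OF comp_CC], simp, simp)
       apply (rule assms) using i m d_def apply simp_all
      apply (rule eval_comp[OF comp_MULT]) by (simp_all add: mult.commute)
  qed simp
  have "eval_recf (OUTER Fq a b) [d, x] (\<Prod>i<d. \<Prod>j<d. val i j)"
    unfolding OUTER_def
  proof (rule eval_Pr_gen[where r = "\<lambda>m. \<Prod>i<m. \<Prod>j<d. val i j" and N = d])
    show "eval_recf (rconst 1) [x] (\<Prod>i<0. \<Prod>j<d. val i j)" using eval_rconst[of 1 "[x]"] by simp
    fix m assume m: "m < d"
    show "eval_recf (GOUT Fq a b) ((\<Prod>i<m. \<Prod>j<d. val i j) # m # [x]) (\<Prod>i<Suc m. \<Prod>j<d. val i j)"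
      unfolding GOUT_def
      apply (rule eval_Comp2[where ya = "\<Prod>i<m. \<Prod>j<d. val i j" and yb = "\<Prod>j<d. val m j"])
        apply (rule eval_Proj', simp, simp) 
       apply (rule eval_Comp3[where ya = d and yb = m and yc = x])
          apply (rule eval_Comp1[where ya = x])
           apply (rule eval_Proj', simp, simp)
          apply (rule eval_comp[OF comp_DD], simp, simp add: d_def Dx_def)
         apply (rule eval_Proj', simp, simp)
         apply (rule eval_Proj', simp, simp)
       apply (rule inner) using m apply simp
      apply (rule eval_comp[OF comp_MULT]) by (simp_all add: mult.commute)
  qed simp
  then show ?thesis
    unfolding PROG_def d_def
    apply -
    apply (rule eval_Comp2[where ya = "Dx x" and yb = x])
      apply (rule eval_comp[OF comp_DD], simp, simp add: Dx_def)
     apply (rule eval_Proj', simp, simp)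
    by simp
qed



declare base_digits.simps[simp del]

lemma base_digits_lt: "k \<ge> 2 \<Longrightarrow> d \<in> set (base_digits k n) \<Longrightarrow> d < k"
proof (induction k n rule: base_digits.induct)
  case (1 k n)
  show ?case
  proof (cases "n = 0 \<or> k < 2")
    case True
    then have "base_digits k n = []" by (subst base_digits.simps) simp
    then show ?thesis using 1 by simp
  next
    case False
    then have e: "base_digits k n = n mod k # base_digits k (n div k)" by (subst base_digits.simps) simp
    show ?thesis
    proof (cases "d = n mod k")
      case True then show ?thesis using False by simp
    next
      case F2: False
      then have "d \<in> set (base_digits k (n div k))" using 1(3) e by simp
      then show ?thesis using 1(1)[OF False 1(2)] by blast
    qed
  qed
qed

lemma mat_prod_list_carrier: "(\<And>M. M \<in> set Ms \<Longrightarrow> M \<in> carrier_mat d d) \<Longrightarrow> mat_prod_list d Ms \<in> carrier_mat d d"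
  unfolding mat_prod_list_def by (induction Ms) (auto intro!: mult_carrier_mat)

definition vrow :: "nat \<Rightarrow> nat \<Rightarrow> 'a::ring_1 mat" where
  "vrow d i = mat 1 d (\<lambda>(r, c). if c = i then 1 else 0)"
definition wcol :: "nat \<Rightarrow> nat \<Rightarrow> 'a::ring_1 mat" where
  "wcol d j = mat d 1 (\<lambda>(r, c). if r = j then 1 else 0)"

lemma delta_l: "i < (d::nat) \<Longrightarrow> (\<Sum>ia = 0..<d. (if ia = i then 1 else 0) * f ia) = (f i :: 'a::ring_1)"
proof -
  assume "i < d"
  have "(\<Sum>ia = 0..<d. (if ia = i then 1 else 0) * f ia) = (\<Sum>ia = 0..<d. if ia = i then f ia else 0)"
    by (rule sum.cong) auto
  also have "\<dots> = f i" using \<open>i < d\<close> by (simp add: sum.delta sum.delta')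
  finally show ?thesis .
qed
lemma delta_r: "i < (d::nat) \<Longrightarrow> (\<Sum>ia = 0..<d. f ia * (if ia = i then 1 else 0)) = (f i :: 'a::ring_1)"
proof -
  assume "i < d"
  have "(\<Sum>ia = 0..<d. f ia * (if ia = i then 1 else 0)) = (\<Sum>ia = 0..<d. if ia = i then f ia else 0)"
    by (rule sum.cong) auto
  also have "\<dots> = f i" using \<open>i < d\<close> by (simp add: sum.delta sum.delta')
  finally show ?thesis .
qed

lemma dim_vrow[simp]: "dim_row (vrow d i) = 1" "dim_col (vrow d i) = d"
  by (auto simp: vrow_def)
lemma dim_wcol[simp]: "dim_row (wcol d i) = d" "dim_col (wcol d i) = 1"
  by (auto simp: wcol_def)
lemma vrow_idx: "c < d \<Longrightarrow> vrow d i $$ (0, c) = (if c = i then 1 else 0)"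
  by (auto simp: vrow_def)
lemma wcol_idx: "c < d \<Longrightarrow> wcol d j $$ (c, 0) = (if c = j then 1 else 0)"
  by (auto simp: wcol_def)

lemma vPw: assumes "P \<in> carrier_mat d d" "i < d" "j < d"
  shows "(vrow d i * P * wcol d j) $$ (0, 0) = (P $$ (i, j) :: 'a::ring_1)"
proof -
  have vP: "(vrow d i * P) $$ (0, c) = P $$ (i, c)" if "c < d" for c
  proof -
    have "(vrow d i * P) $$ (0, c) = (\<Sum>ia = 0..<d. vrow d i $$ (0, ia) * P $$ (ia, c))"
      using assms that by (simp add: scalar_prod_def)
    also have "\<dots> = (\<Sum>ia = 0..<d. (if ia = i then 1 else 0) * P $$ (ia, c))"
      by (rule sum.cong) (auto simp: vrow_idx)
    finally show ?thesis using delta_l[OF assms(2)] by simp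
  qed
  have "(vrow d i * P * wcol d j) $$ (0, 0) = (\<Sum>c = 0..<d. (vrow d i * P) $$ (0, c) * wcol d j $$ (c, 0))"
    using assms by (simp add: scalar_prod_def)
  also have "\<dots> = (\<Sum>c = 0..<d. P $$ (i, c) * (if c = j then 1 else 0))"
    by (rule sum.cong) (auto simp: vP wcol_idx)
  finally show ?thesis using delta_r[OF assms(3)] by simp
qed


lemma concat_map_single: "concat (map (\<lambda>x. [g x]) xs) = map g xs"
  by (induction xs) auto

lemma key:
  fixes Fs :: "'a::ring_1 mat list" and enc :: "'a \<Rightarrow> nat"
  assumes k: "k \<ge> 2" and v: "valid_matrep k Fs"
  defines "x \<equiv> matlist_code enc Fs" and "d \<equiv> matrep_dim Fs"
  shows "Dx x = d"
    and "\<And>i j. i < d \<Longrightarrow> j < d \<Longrightarrow>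
       ccf (enc 1) (enc 0) x i j = linrep_code enc (vrow d i, Fs, wcol d j)
       \<and> valid_linrep k (vrow d i, Fs, wcol d j)
       \<and> linrep_seq k (vrow d i, Fs, wcol d j) = (\<lambda>n. matrep_seq k Fs n $$ (i, j))"
proof -
  have len: "length Fs = k" using v unfolding valid_matrep_def by simp
  then obtain F0 Fr where Fs: "Fs = F0 # Fr" using k by (cases Fs) auto
  have sq: "\<And>F. F \<in> set Fs \<Longrightarrow> F \<in> carrier_mat d d"
    using v unfolding valid_matrep_def d_def matrep_dim_def by auto
  have d0: "dim_row F0 = d" using Fs unfolding d_def matrep_dim_def by simp
  show Dx: "Dx x = d"
    unfolding x_def matlist_code_def Dx_def Fs by (simp add: mat_code_def d0)
  fix i j assume i: "i < d" and j: "j < d"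
  have rr: "\<And>t. t < d \<Longrightarrow> rrf (enc 1) (enc 0) d t d = list_encode (map (\<lambda>l. if l = t then enc 1 else enc 0) [0..<d])"
    by (simp add: rrf_correct)
  show "ccf (enc 1) (enc 0) x i j = linrep_code enc (vrow d i, Fs, wcol d j)
       \<and> valid_linrep k (vrow d i, Fs, wcol d j)
       \<and> linrep_seq k (vrow d i, Fs, wcol d j) = (\<lambda>n. matrep_seq k Fs n $$ (i, j))"
  proof (intro conjI)
    show "ccf (enc 1) (enc 0) x i j = linrep_code enc (vrow d i, Fs, wcol d j)"
    proof -
      have r1: "map (\<lambda>c. enc (vrow d i $$ (0,c))) [0..<d] = map (\<lambda>l. if l = i then enc 1 else enc 0) [0..<d]"
        by (rule map_cong) (auto simp: vrow_idx)
      have r2: "map (\<lambda>c. enc (wcol d j $$ (c,0))) [0..<d] = map (\<lambda>l. if l = j then enc 1 else enc 0) [0..<d]"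
        by (rule map_cong) (auto simp: wcol_idx)
      have m1: "mat_code enc (vrow d i) = list_encode [1, d, list_encode (map (\<lambda>l. if l = i then enc 1 else enc 0) [0..<d])]"
        unfolding mat_code_def by (simp add: r1)
      have m2: "mat_code enc (wcol d j) = list_encode [d, 1, list_encode (map (\<lambda>l. if l = j then enc 1 else enc 0) [0..<d])]"
        unfolding mat_code_def by (simp add: r2 concat_map_single)
      have "ccf (enc 1) (enc 0) x i j = list_encode [list_encode [1, d, rrf (enc 1) (enc 0) d i d], x,
           list_encode [d, 1, rrf (enc 1) (enc 0) d j d]]"
        unfolding ccf_def Dx ..
      also have "\<dots> = linrep_code enc (vrow d i, Fs, wcol d j)"
        by (simp add: linrep_code_def m1 m2 rr[OF i] rr[OF j] x_def matlist_code_def)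
      finally show ?thesis .
    qed
    show "valid_linrep k (vrow d i, Fs, wcol d j)"
      unfolding valid_linrep_def using len sq by auto
    show "linrep_seq k (vrow d i, Fs, wcol d j) = (\<lambda>n. matrep_seq k Fs n $$ (i, j))"
    proof
      fix n
      have "mat_prod_list d (map ((!) Fs) (base_digits k n)) \<in> carrier_mat d d"
        apply (rule mat_prod_list_carrier)
        using base_digits_lt[OF k] len sq by auto
      note C = this
      have "linrep_seq k (vrow d i, Fs, wcol d j) n
          = (vrow d i * mat_prod_list d (map ((!) Fs) (base_digits k n)) * wcol d j) $$ (0, 0)"
        unfolding linrep_seq_def by simp
      also have "\<dots> = mat_prod_list d (map ((!) Fs) (base_digits k n)) $$ (i, j)"
        by (rule vPw[OF C i j])
      also have "\<dots> = matrep_seq k Fs n $$ (i, j)"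
        unfolding matrep_seq_def d_def ..
      finally show "linrep_seq k (vrow d i, Fs, wcol d j) n = matrep_seq k Fs n $$ (i, j)" .
    qed
  qed
qed



lemma prod_01: "(\<Prod>i<d. \<Prod>j<(e::nat). (if Q i j then 1 else 0::nat)) = (if \<forall>i<(d::nat). \<forall>j<e. Q i j then 1 else 0)"
proof (cases "\<forall>i<d. \<forall>j<e. Q i j")
  case True then show ?thesis by simp
next
  case False
  then obtain i j where ij: "i < d" "j < e" "\<not> Q i j" by auto
  have z: "(\<Prod>j<e. (if Q i j then 1 else 0::nat)) = 0" by (rule prod_zero) (use ij in auto)
  have "(\<Prod>i<d. \<Prod>j<(e::nat). (if Q i j then 1 else 0::nat)) = 0"
    by (metis finite_lessThan lessThan_iff prod_zero ij(1) z)
  then show ?thesis using False by simp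
qed

theorem lemma3p7:
  fixes k :: nat and P :: "(nat \<Rightarrow> 'a::ring_1) \<Rightarrow> bool" and enc :: "'a \<Rightarrow> nat"
  assumes "k \<ge> 2"
    and "inj enc"
    and "recursively_solvable (linrep_code enc) (valid_linrep k) (\<lambda>x. P (linrep_seq k x))"
  shows "recursively_solvable (matlist_code enc) (valid_matrep k)
           (\<lambda>Fs. P_all_entries P (matrep_dim Fs) (matrep_seq k Fs))
       \<and> recursively_solvable (matlist_code enc) (valid_matrep k)
           (\<lambda>Fs. P_some_entry P (matrep_dim Fs) (matrep_seq k Fs))"
proof -
  obtain f where f: "\<And>y. valid_linrep k y \<Longrightarrow> eval_recf f [linrep_code enc y] (if P (linrep_seq k y) then 1 else 0)"
    using assms(3) unfolding recursively_solvable_def by blast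
  define e1 where "e1 = enc 1"
  define e0 where "e0 = enc 0"
  have fv: "eval_recf f [ccf e1 e0 (matlist_code enc Fs) i j]
      (if P (\<lambda>n. matrep_seq k Fs n $$ (i, j)) then 1 else 0)"
    if v: "valid_matrep k Fs" and i: "i < matrep_dim Fs" and j: "j < matrep_dim Fs" for Fs i j
  proof -
    have K: "ccf (enc 1) (enc 0) (matlist_code enc Fs) i j = linrep_code enc (vrow (matrep_dim Fs) i, Fs, wcol (matrep_dim Fs) j)"
      "valid_linrep k (vrow (matrep_dim Fs) i, Fs, wcol (matrep_dim Fs) j)"
      "linrep_seq k (vrow (matrep_dim Fs) i, Fs, wcol (matrep_dim Fs) j) = (\<lambda>n. matrep_seq k Fs n $$ (i, j))"
      using key(2)[OF assms(1) v i j, of enc] by auto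
    show ?thesis unfolding e1_def e0_def K(1) using f[OF K(2)] unfolding K(3) .
  qed
  have D: "Dx (matlist_code enc Fs) = matrep_dim Fs" if "valid_matrep k Fs" for Fs
    using key[OF assms(1) that] by blast
  show ?thesis
  proof
    show "recursively_solvable (matlist_code enc) (valid_matrep k)
           (\<lambda>Fs. P_all_entries P (matrep_dim Fs) (matrep_seq k Fs))"
      unfolding recursively_solvable_def
    proof (intro exI allI impI)
      fix Fs :: "'a mat list" assume v: "valid_matrep k Fs"
      define d where "d = matrep_dim Fs"
      have "eval_recf (PROG f e1 e0) [matlist_code enc Fs]
         (\<Prod>i<Dx (matlist_code enc Fs). \<Prod>j<Dx (matlist_code enc Fs).
             (if P (\<lambda>n. matrep_seq k Fs n $$ (i, j)) then 1 else 0))"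
      proof (rule main_loop)
        fix i j assume "i < Dx (matlist_code enc Fs)" "j < Dx (matlist_code enc Fs)"
        then show "eval_recf f [ccf e1 e0 (matlist_code enc Fs) i j] (if P (\<lambda>n. matrep_seq k Fs n $$ (i, j)) then 1 else 0)"
          using fv[OF v] D[OF v] by simp
      qed
      moreover have "(\<Prod>i<d. \<Prod>j<d. (if P (\<lambda>n. matrep_seq k Fs n $$ (i, j)) then 1 else (0::nat)))
          = (if P_all_entries P d (matrep_seq k Fs) then 1 else 0)"
        unfolding P_all_entries_def by (rule prod_01)
      ultimately show "eval_recf (PROG f e1 e0) [matlist_code enc Fs]
          (if P_all_entries P (matrep_dim Fs) (matrep_seq k Fs) then 1 else 0)"
        using D[OF v] d_def by simp
    qed
    show "recursively_solvable (matlist_code enc) (valid_matrep k)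
           (\<lambda>Fs. P_some_entry P (matrep_dim Fs) (matrep_seq k Fs))"
      unfolding recursively_solvable_def
    proof (intro exI allI impI)
      fix Fs :: "'a mat list" assume v: "valid_matrep k Fs"
      define d where "d = matrep_dim Fs"
      define val where "val i j = (if \<not> P (\<lambda>n. matrep_seq k Fs n $$ (i, j)) then 1 else (0::nat))" for i j
      have "eval_recf (PROG (Comp SUB [rconst 1, f]) e1 e0) [matlist_code enc Fs]
         (\<Prod>i<Dx (matlist_code enc Fs). \<Prod>j<Dx (matlist_code enc Fs). val i j)"
      proof (rule main_loop)
        fix i j assume "i < Dx (matlist_code enc Fs)" "j < Dx (matlist_code enc Fs)"
        then have "eval_recf f [ccf e1 e0 (matlist_code enc Fs) i j]
           (if P (\<lambda>n. matrep_seq k Fs n $$ (i, j)) then 1 else 0)" using fv[OF v] D[OF v] by auto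
        then show "eval_recf (Comp SUB [rconst 1, f]) [ccf e1 e0 (matlist_code enc Fs) i j] (val i j)"
          apply -
          apply (rule eval_Comp2[OF eval_rconst], assumption)
          apply (rule eval_comp[OF comp_SUB]) by (auto simp: val_def)
      qed
      then have E: "eval_recf (Comp SUB [rconst 1, PROG (Comp SUB [rconst 1, f]) e1 e0]) [matlist_code enc Fs]
          (1 - (\<Prod>i<d. \<Prod>j<d. val i j))"
        apply -
        apply (rule eval_Comp2[OF eval_rconst], assumption)
        apply (rule eval_comp[OF comp_SUB]) using D[OF v] d_def by auto
      have "1 - (\<Prod>i<d. \<Prod>j<d. val i j) = (if P_some_entry P d (matrep_seq k Fs) then 1 else 0)"
        unfolding P_some_entry_def val_def prod_01 by auto
      with E show "eval_recf (Comp SUB [rconst 1, PROG (Comp SUB [rconst 1, f]) e1 e0]) [matlist_code enc Fs]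
          (if P_some_entry P (matrep_dim Fs) (matrep_seq k Fs) then 1 else 0)"
        using d_def by simp
    qed
  qed
qed

end
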